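(* Let $\mathbb{F}_q$ be a finite field with $\mathrm{char}(\mathbb{F}_q)>3$ and $3\mid q-1$, let $C$ be the subgroup of cubes in $\mathbb{F}_q^\times$ (of index $3$), and let $z\in\mathbb{F}_q^\times\setminus C$. Let $a,b\in\mathbb{F}_q^\times$. (1) If $a$ and $b$ lie in the same coset of $C$, then $J_3(a,b)$ is conjugate to $J_3(1,1)$. (2) If $a$ and $b$ lie in different cosets of $C$, then $J_3(a,b)$ is conjugate to $J_3(1,z)$ or to $J_3(1,z^2)$.
   Context: $\mathfrak{sl}_3(\mathbb{F}_q)$ is the Lie algebra of $3\times3$ traceless matrices over $\mathbb{F}_q$. Fix a primitive cube root of unity $u\in\mathbb{F}_q$. For nonzero $a,b\in\mathbb{F}_q$, $J_3(a,b)$ denotes the decomposition $\mathfrak{sl}_3(\mathbb{F}_q)=H_0\oplus H_1\oplus H_2\oplus H_3$, where $H_0$ is the subalgebra of traceless diagonal matrices and, for $j=1,2,3$ with $(\lambda_j,\mu_j)=(1,1),(u,u^2),(u^2,u)$ respectively, $H_j=\left\langle \begin{pmatrix}0&1&0\\0&0&\lambda_j a\\ \mu_j ab&0&0\end{pmatrix},\begin{pmatrix}0&0&1\\ \mu_j ab&0&0\\0&\lambda_j b&0\end{pmatrix}\right\rangle_{\mathbb{F}_q}$. (Such a decomposition is called a $J_3$-decomposition.) Two such decompositions are conjugate if there is a Lie algebra automorphism of $\mathfrak{sl}_3(\mathbb{F}_q)$ mapping each component of the first onto exactly one component of the second. *)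

theory Defs
  imports "HOL-Analysis.Analysis"
begin

text \<open>3x3 matrices over a field are modelled as 'a^3^3 (HOL-Analysis); row/column
  indices 1,2,3 are the elements 1,2,3 (= 0) of the numeral type 3.\<close>

definition mat3 :: "'a \<Rightarrow> 'a \<Rightarrow> 'a \<Rightarrow> 'a \<Rightarrow> 'a \<Rightarrow> 'a \<Rightarrow> 'a \<Rightarrow> 'a \<Rightarrow> 'a \<Rightarrow> 'a^3^3" where
  "mat3 a11 a12 a13 a21 a22 a23 a31 a32 a33 =
     (\<chi> i j. if i = 1 then (if j = 1 then a11 else if j = 2 then a12 else a13)
             else if i = 2 then (if j = 1 then a21 else if j = 2 then a22 else a23)
             else (if j = 1 then a31 else if j = 2 then a32 else a33))"

definition sl3 :: "(('a::field)^3^3) set" where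
  "sl3 = {A. trace A = 0}"

definition lie_bracket :: "('a::field)^3^3 \<Rightarrow> 'a^3^3 \<Rightarrow> 'a^3^3" where
  "lie_bracket A B = A ** B - B ** A"

definition msmult :: "'a::field \<Rightarrow> 'a^3^3 \<Rightarrow> 'a^3^3" where
  "msmult c A = (\<chi> i j. c * A $ i $ j)"

definition sl3_aut :: "(('a::field)^3^3 \<Rightarrow> 'a^3^3) \<Rightarrow> bool" where
  "sl3_aut \<phi> \<longleftrightarrow> bij_betw \<phi> sl3 sl3
     \<and> (\<forall>A\<in>sl3. \<forall>B\<in>sl3. \<phi> (A + B) = \<phi> A + \<phi> B)
     \<and> (\<forall>c. \<forall>A\<in>sl3. \<phi> (msmult c A) = msmult c (\<phi> A))
     \<and> (\<forall>A\<in>sl3. \<forall>B\<in>sl3. \<phi> (lie_bracket A B) = lie_bracket (\<phi> A) (\<phi> B))"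

definition span2 :: "('a::field)^3^3 \<Rightarrow> 'a^3^3 \<Rightarrow> ('a^3^3) set" where
  "span2 X Y = {msmult c X + msmult d Y | c d. True}"

definition H0 :: "(('a::field)^3^3) set" where
  "H0 = {A \<in> sl3. \<forall>i j. i \<noteq> j \<longrightarrow> A $ i $ j = 0}"

definition lamJ :: "'a::field \<Rightarrow> nat \<Rightarrow> 'a" where
  "lamJ u j = (if j = 1 then 1 else if j = 2 then u else u ^ 2)"

definition muJ :: "'a::field \<Rightarrow> nat \<Rightarrow> 'a" where
  "muJ u j = (if j = 1 then 1 else if j = 2 then u ^ 2 else u)"

text \<open>The decomposition J_3(a,b) (w.r.t. the cube root of unity u), as the family of
  its components H_0, H_1, H_2, H_3 indexed by 0..3.\<close>
definition J3 :: "'a::field \<Rightarrow> 'a \<Rightarrow> 'a \<Rightarrow> nat \<Rightarrow> ('a^3^3) set" where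
  "J3 u a b j = (if j = 0 then H0 else
     span2 (mat3 0 1 0  0 0 (lamJ u j * a)  (muJ u j * a * b) 0 0)
           (mat3 0 0 1  (muJ u j * a * b) 0 0  0 (lamJ u j * b) 0))"

definition conj_dec :: "(nat \<Rightarrow> (('a::field)^3^3) set) \<Rightarrow> (nat \<Rightarrow> ('a^3^3) set) \<Rightarrow> bool" where
  "conj_dec H H' \<longleftrightarrow> (\<exists>\<phi>. sl3_aut \<phi> \<and> (\<forall>j<4. \<exists>!k. k < 4 \<and> \<phi> ` H j = H' k))"

definition cubes :: "'a::field set" where
  "cubes = {x ^ 3 | x. x \<noteq> 0}"

end

theory Submission
  imports Defs
begin


definition phi :: "(3 \<Rightarrow> 'a::field) \<Rightarrow> 'a^3^3 \<Rightarrow> 'a^3^3" where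
  "phi d A = (\<chi> i j. d i / d j * A $ i $ j)"

lemma phi_add: "phi d (A + B) = phi d A + phi d B"
  by (simp add: phi_def vec_eq_iff algebra_simps)

lemma phi_smult: "phi d (msmult c A) = msmult c (phi d A)"
  by (simp add: phi_def msmult_def vec_eq_iff algebra_simps)

lemma phi_trace: "(\<forall>i. d i \<noteq> 0) \<Longrightarrow> trace (phi d A) = trace A"
  by (simp add: phi_def trace_def)

lemma phi_mult: "(\<forall>i. d i \<noteq> 0) \<Longrightarrow> phi d (A ** B) = phi d A ** phi d B"
  by (simp add: phi_def matrix_matrix_mult_def vec_eq_iff sum_distrib_left sum_3 field_simps)

lemma phi_bracket: "(\<forall>i. d i \<noteq> 0) \<Longrightarrow> phi d (lie_bracket A B) = lie_bracket (phi d A) (phi d B)"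
proof -
  assume d: "\<forall>i. d i \<noteq> 0"
  have "phi d (A ** B - B ** A) = phi d (A ** B) - phi d (B ** A)"
    by (simp add: phi_def vec_eq_iff algebra_simps)
  thus ?thesis by (simp add: lie_bracket_def phi_mult[OF d])
qed

lemma phi_inv: "(\<forall>i. d i \<noteq> 0) \<Longrightarrow> phi (\<lambda>i. inverse (d i)) (phi d A) = A"
  by (simp add: phi_def vec_eq_iff field_simps)

lemma phi_aut: assumes "\<forall>i. d i \<noteq> 0" shows "sl3_aut (phi d)"
proof -
  have inv: "\<forall>i. inverse (d i) \<noteq> 0" using assms by simp
  have "bij_betw (phi d) sl3 sl3"
    apply (rule bij_betw_byWitness[where f'="phi (\<lambda>i. inverse (d i))"])
    using phi_inv[OF assms] phi_inv[OF inv] phi_trace[OF assms] phi_trace[OF inv]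
    by (auto simp: sl3_def)
  thus ?thesis using assms by (simp add: sl3_aut_def phi_add phi_smult phi_bracket)
qed

lemma phi_span2: "phi d ` span2 X Y = span2 (phi d X) (phi d Y)"
proof
  show "phi d ` span2 X Y \<subseteq> span2 (phi d X) (phi d Y)"
    unfolding span2_def by (auto simp: phi_add phi_smult) blast
  show "span2 (phi d X) (phi d Y) \<subseteq> phi d ` span2 X Y"
  proof
    fix M assume "M \<in> span2 (phi d X) (phi d Y)"
    then obtain c e where M: "M = msmult c (phi d X) + msmult e (phi d Y)" by (auto simp: span2_def)
    have "M = phi d (msmult c X + msmult e Y)" by (simp add: M phi_add phi_smult)
    moreover have "msmult c X + msmult e Y \<in> span2 X Y" by (auto simp: span2_def)
    ultimately show "M \<in> phi d ` span2 X Y" by blast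
  qed
qed

lemma msmult_msmult: "msmult c (msmult s X) = msmult (c * s) X"
  by (simp add: msmult_def vec_eq_iff)

lemma span2_scale:
  fixes X Y :: "'a::field^3^3"
  assumes s: "s \<noteq> 0" and t: "t \<noteq> 0"
  shows "span2 (msmult s X) (msmult t Y) = span2 X Y"
proof
  show "span2 (msmult s X) (msmult t Y) \<subseteq> span2 X Y"
    by (auto simp: span2_def msmult_msmult)
  show "span2 X Y \<subseteq> span2 (msmult s X) (msmult t Y)"
  proof
    fix M assume "M \<in> span2 X Y"
    then obtain c e where M: "M = msmult c X + msmult e Y" by (auto simp: span2_def)
    have "M = msmult (c/s) (msmult s X) + msmult (e/t) (msmult t Y)"
      using s t by (simp add: M msmult_msmult)
    thus "M \<in> span2 (msmult s X) (msmult t Y)" by (auto simp: span2_def)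
  qed
qed

lemma phi_H0: fixes d :: "3 \<Rightarrow> 'a::field" assumes "\<forall>i. d i \<noteq> 0" shows "phi d ` H0 = H0"
proof
  show "phi d ` H0 \<subseteq> H0" using phi_trace[OF assms] by (auto simp: H0_def sl3_def phi_def)
  show "H0 \<subseteq> phi d ` H0"
  proof
    fix A :: "'a^3^3" assume A: "A \<in> H0"
    have inv: "\<forall>i. inverse (d i) \<noteq> 0" using assms by simp
    let ?B = "phi (\<lambda>i. inverse (d i)) A"
    have "?B \<in> H0" using A phi_trace[OF inv] by (auto simp: H0_def sl3_def phi_def)
    moreover have "phi d ?B = A" using phi_inv[OF inv] by simp
    ultimately show "A \<in> phi d ` H0" by force
  qed
qed



lemma three_neq: "(2::3) \<noteq> 1" "(3::3) \<noteq> 1" "(3::3) \<noteq> 2" "(1::3) \<noteq> 2" "(1::3) \<noteq> 3" "(2::3) \<noteq> 3"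
  by simp_all

lemma mat3_nth:
  "mat3 a11 a12 a13 a21 a22 a23 a31 a32 a33 $ 1 $ 1 = a11"
  "mat3 a11 a12 a13 a21 a22 a23 a31 a32 a33 $ 1 $ 2 = a12"
  "mat3 a11 a12 a13 a21 a22 a23 a31 a32 a33 $ 1 $ 3 = a13"
  "mat3 a11 a12 a13 a21 a22 a23 a31 a32 a33 $ 2 $ 1 = a21"
  "mat3 a11 a12 a13 a21 a22 a23 a31 a32 a33 $ 2 $ 2 = a22"
  "mat3 a11 a12 a13 a21 a22 a23 a31 a32 a33 $ 2 $ 3 = a23"
  "mat3 a11 a12 a13 a21 a22 a23 a31 a32 a33 $ 3 $ 1 = a31"
  "mat3 a11 a12 a13 a21 a22 a23 a31 a32 a33 $ 3 $ 2 = a32"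
  "mat3 a11 a12 a13 a21 a22 a23 a31 a32 a33 $ 3 $ 3 = a33"
  unfolding mat3_def by simp_all

lemma mat_eq3: "(A::'a^3^3) = B \<longleftrightarrow> (\<forall>i\<in>{1,2,3}. \<forall>j\<in>{1,2,3}. A $ i $ j = B $ i $ j)"
proof
  assume "\<forall>i\<in>{1,2,3}. \<forall>j\<in>{1,2,3}. A $ i $ j = B $ i $ j"
  hence "\<forall>i j. A $ i $ j = B $ i $ j" by (metis UNIV_3 UNIV_I)
  thus "A = B" by (simp add: vec_eq_iff)
qed simp

definition dd :: "'a::field \<Rightarrow> 'a \<Rightarrow> 3 \<Rightarrow> 'a" where
  "dd a y = (\<lambda>i. if i = 1 then a * y^2 else if i = 2 then y else 1)"

lemma dd_nz: "a \<noteq> 0 \<Longrightarrow> y \<noteq> 0 \<Longrightarrow> \<forall>i. dd a y i \<noteq> 0"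
  by (simp add: dd_def)

lemma phiX:
  assumes "a \<noteq> 0" "y \<noteq> 0"
  shows "phi (dd a y) (mat3 0 1 0  0 0 (l * a)  (m * a * b) 0 0)
       = msmult (a*y) (mat3 0 1 0  0 0 (l * 1)  (m * 1 * (b / (a * y^3))) 0 0)"
  using assms unfolding mat_eq3
  apply (simp add: phi_def msmult_def mat3_nth dd_def three_neq)
  apply (simp_all add: field_simps power2_eq_square power3_eq_cube)
  done

lemma phiY:
  assumes "a \<noteq> 0" "y \<noteq> 0"
  shows "phi (dd a y) (mat3 0 0 1  (m * a * b) 0 0  0 (l * b) 0)
       = msmult (a*y^2) (mat3 0 0 1  (m * 1 * (b / (a * y^3))) 0 0  0 (l * (b / (a * y^3))) 0)"
  using assms unfolding mat_eq3
  apply (simp add: phi_def msmult_def mat3_nth dd_def three_neq)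
  apply (simp_all add: field_simps power2_eq_square power3_eq_cube)
  done

lemma phi_J3:
  fixes a b y :: "'a::field"
  assumes "a \<noteq> 0" "y \<noteq> 0"
  shows "phi (dd a y) ` J3 u a b j = J3 u 1 (b / (a * y^3)) j"
  using assms
  by (simp add: J3_def phi_H0 dd_nz phi_span2 phiX phiY span2_scale)



lemma cube_roots:
  fixes u w :: "'a::field"
  assumes "u^3 = 1" "u \<noteq> 1" "w^3 = 1"
  shows "w = 1 \<or> w = u \<or> w = u^2"
proof -
  have "(u - 1) * (1 + u + u^2) = u^3 - 1" by (simp add: algebra_simps power2_eq_square power3_eq_cube)
  hence s: "1 + u + u^2 = 0" using assms by simp
  have "(w - 1) * (w - u) * (w - u^2) = w^3 - (1 + u + u^2) * w^2 + (u + u^2 + u^3) * w - u^3"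
    by (simp add: algebra_simps power2_eq_square power3_eq_cube)
  also have "u + u^2 + u^3 = u * (1 + u + u^2)" by (simp add: algebra_simps power2_eq_square power3_eq_cube)
  finally have "(w - 1) * (w - u) * (w - u^2) = 0" using s assms by simp
  thus ?thesis by auto
qed

lemma u_facts:
  fixes u :: "'a::field"
  assumes "u^3 = 1" "u \<noteq> 1"
  shows "u \<noteq> 0" "u^2 \<noteq> 1" "u^2 \<noteq> u"
proof -
  show u0: "u \<noteq> 0" using assms by auto
  show "u^2 \<noteq> 1"
  proof
    assume "u^2 = 1"
    hence "u^3 = u" by (simp add: power3_eq_cube power2_eq_square)
    thus False using assms by simp
  qed
  show "u^2 \<noteq> u"
  proof
    assume "u^2 = u"
    hence "u = 1" using u0 by (simp add: power2_eq_square)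
    thus False using assms by simp
  qed
qed

lemma fib_card:
  fixes u x0 :: "'a::field"
  assumes "u^3 = 1" "u \<noteq> 1" "x0 \<noteq> 0"
  shows "card {x. x \<noteq> 0 \<and> x^3 = x0^3} = 3"
proof -
  note uf = u_facts[OF assms(1,2)]
  have "{x. x \<noteq> 0 \<and> x^3 = x0^3} = {x0, x0*u, x0*u^2}"
  proof (intro set_eqI iffI)
    fix x assume "x \<in> {x. x \<noteq> 0 \<and> x^3 = x0^3}"
    hence x: "x \<noteq> 0" "x^3 = x0^3" by auto
    have "(x / x0)^3 = 1" using x assms by (simp add: power_divide)
    hence "x / x0 = 1 \<or> x / x0 = u \<or> x / x0 = u^2" using cube_roots assms by blast
    thus "x \<in> {x0, x0*u, x0*u^2}" using assms(3) by (auto simp: field_simps)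
  next
    fix x assume "x \<in> {x0, x0*u, x0*u^2}"
    have u6: "(u^2)^3 = 1" using assms(1) by (metis power_mult mult.commute power_one)
    show "x \<in> {x. x \<noteq> 0 \<and> x^3 = x0^3}" using \<open>x \<in> {x0, x0*u, x0*u^2}\<close> assms uf u6
      by (auto simp: power_mult_distrib)
  qed
  moreover have "card {x0, x0*u, x0*u^2} = 3" using assms uf by auto
  ultimately show ?thesis by simp
qed

lemma coset_cover:
  fixes u z t :: "'a::{field,finite}"
  assumes "u^3 = 1" "u \<noteq> 1" "z \<noteq> 0" "z \<notin> cubes" "t \<noteq> 0"
  shows "t \<in> cubes \<or> (\<exists>y. y \<noteq> 0 \<and> t = z * y^3) \<or> (\<exists>y. y \<noteq> 0 \<and> t = z^2 * y^3)"
proof -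
  define N where "N = {x::'a. x \<noteq> 0}"
  define fib where "fib c = {x::'a. x \<noteq> 0 \<and> x^3 = c}" for c
  have cN: "cubes \<subseteq> N" by (auto simp: cubes_def N_def)
  have "N = (\<Union>c\<in>cubes. fib c)" by (auto simp: N_def fib_def cubes_def)
  hence "card N = (\<Sum>c\<in>cubes. card (fib c))"
    by (simp add: card_UN_disjoint fib_def) (subst card_UN_disjoint; auto)
  also have "\<dots> = (\<Sum>c\<in>(cubes::'a set). 3)"
  proof (rule sum.cong[OF refl])
    fix c :: 'a assume "c \<in> cubes"
    then obtain x0 where "x0 \<noteq> 0" "c = x0^3" by (auto simp: cubes_def)
    thus "card (fib c) = 3" using fib_card[OF assms(1,2)] by (simp add: fib_def)
  qed
  finally have cardN: "card N = 3 * card (cubes::'a set)" by simp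
  define A1 where "A1 = (\<lambda>x. z * x) ` cubes"
  define A2 where "A2 = (\<lambda>x. z^2 * x) ` cubes"
  have c1: "card A1 = card (cubes::'a set)" unfolding A1_def
    by (rule card_image) (use assms(3) in \<open>auto simp: inj_on_def\<close>)
  have c2: "card A2 = card (cubes::'a set)" unfolding A2_def
    by (rule card_image) (use assms(3) in \<open>auto simp: inj_on_def\<close>)
  have d1: "cubes \<inter> A1 = {}"
  proof (rule ccontr)
    assume "cubes \<inter> A1 \<noteq> {}"
    then obtain v w where "v \<noteq> 0" "w \<noteq> 0" "v^3 = z * w^3" by (auto simp: A1_def cubes_def; metis)
    hence "z = (v/w)^3" by (simp add: power_divide field_simps)
    moreover have "v / w \<noteq> 0" using \<open>v \<noteq> 0\<close> \<open>w \<noteq> 0\<close> by simp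
    ultimately show False using assms(4) by (auto simp: cubes_def)
  qed
  have z2: "z^2 \<notin> cubes"
  proof
    assume "z^2 \<in> cubes"
    then obtain s where s: "s \<noteq> 0" "z^2 = s^3" by (auto simp: cubes_def)
    have "z = (z / s)^3" using s assms(3)
      by (simp add: power_divide field_simps power2_eq_square power3_eq_cube)
    thus False using assms(3,4) s by (auto simp: cubes_def)
  qed
  have d2: "cubes \<inter> A2 = {}"
  proof (rule ccontr)
    assume "cubes \<inter> A2 \<noteq> {}"
    then obtain v w where "v \<noteq> 0" "w \<noteq> 0" "v^3 = z^2 * w^3" by (auto simp: A2_def cubes_def; metis)
    hence "z^2 = (v/w)^3" by (simp add: power_divide field_simps)
    moreover have "v / w \<noteq> 0" using \<open>v \<noteq> 0\<close> \<open>w \<noteq> 0\<close> by simp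
    ultimately show False using z2 by (auto simp: cubes_def)
  qed
  have d3: "A1 \<inter> A2 = {}"
  proof (rule ccontr)
    assume "A1 \<inter> A2 \<noteq> {}"
    then obtain v w where "v \<noteq> 0" "w \<noteq> 0" "z * v^3 = z^2 * w^3" by (auto simp: A1_def A2_def cubes_def)
    hence "v^3 = z * w^3" using assms(3) by (simp add: power2_eq_square)
    hence "z = (v/w)^3" using \<open>w \<noteq> 0\<close> by (simp add: power_divide field_simps)
    moreover have "v / w \<noteq> 0" using \<open>v \<noteq> 0\<close> \<open>w \<noteq> 0\<close> by simp
    ultimately show False using assms(4) by (auto simp: cubes_def)
  qed
  have sub: "cubes \<union> A1 \<union> A2 \<subseteq> N" using cN assms(3) by (auto simp: A1_def A2_def N_def cubes_def)
  have "card (cubes \<union> A1 \<union> A2) = card (cubes::'a set) + card A1 + card A2"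
  proof -
    have "(cubes \<union> A1) \<inter> A2 = {}" using d2 d3 by blast
    hence "card (cubes \<union> A1 \<union> A2) = card (cubes \<union> A1) + card A2"
      by (simp add: card_Un_disjoint)
    thus ?thesis using d1 by (simp add: card_Un_disjoint)
  qed
  hence "card (cubes \<union> A1 \<union> A2) = card N" using cardN c1 c2 by simp
  hence "cubes \<union> A1 \<union> A2 = N" using sub by (simp add: card_subset_eq)
  moreover have "t \<in> N" using assms(5) by (simp add: N_def)
  ultimately have "t \<in> cubes \<or> t \<in> A1 \<or> t \<in> A2" by blast
  thus ?thesis by (auto simp: A1_def A2_def cubes_def)
qed



lemma lamJ_inj:
  fixes u :: "'a::field"
  assumes "u^3 = 1" "u \<noteq> 1" "j \<in> {1,2,3}" "k \<in> {1,2,3}" "lamJ u j = lamJ u k"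
  shows "j = k"
  using assms u_facts[OF assms(1,2)] by (auto simp: lamJ_def split: if_splits)

lemma XinJ:
  "j \<noteq> 0 \<Longrightarrow> mat3 0 1 0  0 0 (lamJ u j * 1)  (muJ u j * 1 * c) 0 0 \<in> J3 u 1 c j"
  unfolding J3_def span2_def
  apply simp
  apply (rule exI[of _ 1], rule exI[of _ 0])
  by (simp add: msmult_def vec_eq_iff)

lemma XnotH0:
  "mat3 0 1 0  0 0 l m 0 0 \<notin> (H0 :: ('a::field^3^3) set)"
proof
  assume "mat3 0 1 0  0 0 l m 0 0 \<in> (H0 :: ('a::field^3^3) set)"
  hence "(mat3 0 1 0  0 0 l m 0 0 :: 'a^3^3) $ 1 $ 2 = 0" using three_neq(4) by (simp add: H0_def)
  thus False by (simp add: mat3_nth)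
qed

lemma Xin_lam:
  assumes "k \<noteq> 0" "mat3 0 1 0  0 0 (lamJ u j * 1)  (muJ u j * 1 * c) 0 0 \<in> J3 u 1 c k"
  shows "lamJ u j = lamJ u k"
proof -
  from assms obtain s t where st:
    "mat3 0 1 0  0 0 (lamJ u j * 1)  (muJ u j * 1 * c) 0 0 =
     msmult s (mat3 0 1 0  0 0 (lamJ u k * 1)  (muJ u k * 1 * c) 0 0)
     + msmult t (mat3 0 0 1  (muJ u k * 1 * c) 0 0  0 (lamJ u k * c) 0)"
    by (auto simp: J3_def span2_def)
  have e12: "1 = s" using arg_cong[OF st, of "\<lambda>M. M $ 1 $ 2"] by (simp add: msmult_def mat3_nth)
  have e13: "0 = t" using arg_cong[OF st, of "\<lambda>M. M $ 1 $ 3"] by (simp add: msmult_def mat3_nth)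
  show ?thesis using arg_cong[OF st, of "\<lambda>M. M $ 2 $ 3"] e12 e13 by (simp add: msmult_def mat3_nth)
qed

lemma J3_distinct:
  fixes u c :: "'a::field"
  assumes "u^3 = 1" "u \<noteq> 1" "j < 4" "k < 4" "J3 u 1 c j = J3 u 1 c k"
  shows "j = k"
proof (cases "j = 0")
  case True
  show ?thesis
  proof (rule ccontr)
    assume "j \<noteq> k"
    hence "k \<noteq> 0" using True by simp
    hence "mat3 0 1 0  0 0 (lamJ u k * 1)  (muJ u k * 1 * c) 0 0 \<in> J3 u 1 c j" using XinJ assms(5) by metis
    thus False using True XnotH0[of "lamJ u k * 1" "muJ u k * 1 * c"] by (simp add: J3_def)
  qed
next
  case False
  have X: "mat3 0 1 0  0 0 (lamJ u j * 1)  (muJ u j * 1 * c) 0 0 \<in> J3 u 1 c k" using XinJ[OF False] assms(5) by metis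
  show ?thesis
  proof (cases "k = 0")
    case True thus ?thesis using X XnotH0[of "lamJ u j * 1" "muJ u j * 1 * c"] by (simp add: J3_def)
  next
    case k: False
    have "lamJ u j = lamJ u k" using Xin_lam[OF k X] .
    moreover have "j \<in> {1,2,3}" "k \<in> {1,2,3}" using False k assms(3,4) by auto
    ultimately show ?thesis using lamJ_inj assms(1,2) by blast
  qed
qed

lemma conj_from_phi:
  fixes u a b y :: "'a::field"
  assumes "u^3 = 1" "u \<noteq> 1" "a \<noteq> 0" "y \<noteq> 0" "c = b / (a * y^3)"
  shows "conj_dec (J3 u a b) (J3 u 1 c)"
  unfolding conj_dec_def
proof (intro exI conjI allI impI)
  show "sl3_aut (phi (dd a y))" using phi_aut dd_nz assms by blast
  fix j :: nat assume j: "j < 4"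
  show "\<exists>!k. k < 4 \<and> phi (dd a y) ` J3 u a b j = J3 u 1 c k"
  proof (rule ex1I[of _ j])
    show "j < 4 \<and> phi (dd a y) ` J3 u a b j = J3 u 1 c j" using j phi_J3 assms by simp
    fix k assume "k < 4 \<and> phi (dd a y) ` J3 u a b j = J3 u 1 c k"
    moreover have "phi (dd a y) ` J3 u a b j = J3 u 1 c j" using phi_J3 assms by simp
    ultimately have "k < 4" "J3 u 1 c j = J3 u 1 c k" by auto
    thus "k = j" using J3_distinct[OF assms(1,2) j] by metis
  qed
qed

theorem proposition3p10:
  fixes u z a b :: "'a::{field, finite}"
  assumes "CHAR('a) > 3"
    and "3 dvd (CARD('a) - 1)"
    and "u ^ 3 = 1" and "u \<noteq> 1"
    and "z \<noteq> 0" and "z \<notin> cubes"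
    and "a \<noteq> 0" and "b \<noteq> 0"
  shows "(a / b \<in> cubes \<longrightarrow> conj_dec (J3 u a b) (J3 u 1 1))
       \<and> (a / b \<notin> cubes \<longrightarrow>
            conj_dec (J3 u a b) (J3 u 1 z) \<or> conj_dec (J3 u a b) (J3 u 1 (z ^ 2)))"
proof (intro conjI impI)
  assume "a / b \<in> cubes"
  then obtain w where w: "w \<noteq> 0" "a / b = w^3" by (auto simp: cubes_def)
  have "1 = b / (a * (1/w)^3)" using w assms(7,8) by (simp add: field_simps power_divide)
  thus "conj_dec (J3 u a b) (J3 u 1 1)"
    using conj_from_phi[where y="1/w" and c=1 and b=b, OF assms(3,4,7)] w by simp
next
  assume nc: "a / b \<notin> cubes"
  have "b / a \<notin> cubes"
  proof
    assume "b / a \<in> cubes"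
    then obtain w where w: "w \<noteq> 0" "b / a = w^3" by (auto simp: cubes_def)
    hence "a / b = (1/w)^3" by (simp add: power_divide) (metis divide_divide_eq_right div_by_1 mult_1 power_divide power_one)
    thus False using nc w by (auto simp: cubes_def)
  qed
  moreover have "b / a \<noteq> 0" using assms by simp
  ultimately have "(\<exists>y. y \<noteq> 0 \<and> b / a = z * y^3) \<or> (\<exists>y. y \<noteq> 0 \<and> b / a = z^2 * y^3)"
    using coset_cover[OF assms(3,4,5,6)] by blast
  thus "conj_dec (J3 u a b) (J3 u 1 z) \<or> conj_dec (J3 u a b) (J3 u 1 (z ^ 2))"
  proof
    assume "\<exists>y. y \<noteq> 0 \<and> b / a = z * y^3"
    then obtain y where y: "y \<noteq> 0" "b / a = z * y^3" by blast
    have "z = b / (a * y^3)" using y assms(7) by (simp add: field_simps)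
    thus ?thesis using conj_from_phi[OF assms(3,4,7) y(1)] by blast
  next
    assume "\<exists>y. y \<noteq> 0 \<and> b / a = z^2 * y^3"
    then obtain y where y: "y \<noteq> 0" "b / a = z^2 * y^3" by blast
    have "z^2 = b / (a * y^3)" using y assms(7) by (simp add: field_simps)
    thus ?thesis using conj_from_phi[OF assms(3,4,7) y(1)] by blast
  qed
qed


end
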